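(* If $H$ is a convex subgraph of a graph $G$, then $\chi_{\mu_k}(G)\ge \chi_{\mu_k}(H)$ for every positive integer $k$.
   Context: A subgraph $H$ of $G$ is convex if for all $x,y\in V(H)$, every $x,y$-geodesic (shortest path) of $G$ lies entirely in $H$. For a positive integer $k$, a set $M\subseteq V(G)$ is a $k$-distance mutual-visibility set if for every two vertices $u,v\in M$ there exists a $u,v$-geodesic of length at most $k$ none of whose internal vertices lies in $M$. $\chi_{\mu_k}(G)$ is the minimum cardinality of a partition of $V(G)$ into $k$-distance mutual-visibility sets. *)

theory Defs
  imports Main "HOL-Library.Disjoint_Sets"
begin

definition graph :: "'a set \<Rightarrow> ('a \<times> 'a) set \<Rightarrow> bool" where
  "graph V E \<longleftrightarrow> finite V \<and> E \<subseteq> V \<times> V \<and> sym E \<and> (\<forall>x. (x, x) \<notin> E)"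

definition walk :: "'a set \<Rightarrow> ('a \<times> 'a) set \<Rightarrow> 'a \<Rightarrow> 'a \<Rightarrow> 'a list \<Rightarrow> bool" where
  "walk V E u v xs \<longleftrightarrow> xs \<noteq> [] \<and> hd xs = u \<and> last xs = v \<and> set xs \<subseteq> V \<and>
     (\<forall>i. Suc i < length xs \<longrightarrow> (xs ! i, xs ! Suc i) \<in> E)"

definition walk_edges :: "'a list \<Rightarrow> ('a \<times> 'a) set" where
  "walk_edges xs = {(xs ! i, xs ! Suc i) | i. Suc i < length xs}"

definition walk_len :: "'a list \<Rightarrow> nat" where
  "walk_len xs = length xs - 1"

definition geodesic :: "'a set \<Rightarrow> ('a \<times> 'a) set \<Rightarrow> 'a \<Rightarrow> 'a \<Rightarrow> 'a list \<Rightarrow> bool" where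
  "geodesic V E u v xs \<longleftrightarrow> walk V E u v xs \<and>
     (\<forall>ys. walk V E u v ys \<longrightarrow> walk_len xs \<le> walk_len ys)"

definition subgraph :: "'a set \<Rightarrow> ('a \<times> 'a) set \<Rightarrow> 'a set \<Rightarrow> ('a \<times> 'a) set \<Rightarrow> bool" where
  "subgraph VH EH V E \<longleftrightarrow> VH \<subseteq> V \<and> EH \<subseteq> E"

definition convex_subgraph :: "'a set \<Rightarrow> ('a \<times> 'a) set \<Rightarrow> 'a set \<Rightarrow> ('a \<times> 'a) set \<Rightarrow> bool" where
  "convex_subgraph VH EH V E \<longleftrightarrow> subgraph VH EH V E \<and>
     (\<forall>x\<in>VH. \<forall>y\<in>VH. \<forall>P. geodesic V E x y P \<longrightarrow> set P \<subseteq> VH \<and> walk_edges P \<subseteq> EH)"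

definition internal :: "'a list \<Rightarrow> 'a set" where
  "internal xs = set (butlast (tl xs))"

definition kdist_mv_set :: "nat \<Rightarrow> 'a set \<Rightarrow> ('a \<times> 'a) set \<Rightarrow> 'a set \<Rightarrow> bool" where
  "kdist_mv_set k V E M \<longleftrightarrow> M \<subseteq> V \<and>
     (\<forall>u\<in>M. \<forall>v\<in>M. \<exists>P. geodesic V E u v P \<and> walk_len P \<le> k \<and> internal P \<inter> M = {})"

definition chi_mu :: "nat \<Rightarrow> 'a set \<Rightarrow> ('a \<times> 'a) set \<Rightarrow> nat" where
  "chi_mu k V E = (LEAST n. \<exists>\<P>. partition_on V \<P> \<and> finite \<P> \<and> card \<P> = n \<and>
      (\<forall>M\<in>\<P>. kdist_mv_set k V E M))"

end

theory Submission
  imports Defs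
begin

lemma walk_sub:
  assumes "walk V E u v xs" "set xs \<subseteq> VH" "walk_edges xs \<subseteq> EH"
  shows "walk VH EH u v xs"
  using assms unfolding walk_def walk_edges_def by blast

lemma walk_mono:
  assumes "walk VH EH u v xs" "VH \<subseteq> V" "EH \<subseteq> E"
  shows "walk V E u v xs"
  using assms unfolding walk_def by blast

lemma singleton_mv:
  assumes "x \<in> V"
  shows "kdist_mv_set k V E {x}"
proof -
  have "geodesic V E x x [x]"
    using assms by (auto simp: geodesic_def walk_def walk_len_def)
  moreover have "walk_len [x] \<le> k" "internal [x] \<inter> {x} = {}"
    by (auto simp: walk_len_def internal_def)
  ultimately show ?thesis using assms unfolding kdist_mv_set_def by blast
qed

theorem proposition2p5:
  fixes V VH :: "'a set" and E EH :: "('a \<times> 'a) set" and k :: nat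
  assumes "graph V E" and "graph VH EH"
    and "convex_subgraph VH EH V E"
    and "k > 0"
  shows "chi_mu k V E \<ge> chi_mu k VH EH"
proof -
  have finV: "finite V" using assms(1) by (simp add: graph_def)
  have sub: "VH \<subseteq> V" "EH \<subseteq> E" using assms(3) by (auto simp: convex_subgraph_def subgraph_def)
  have conv: "\<And>x y P. x \<in> VH \<Longrightarrow> y \<in> VH \<Longrightarrow> geodesic V E x y P \<Longrightarrow> set P \<subseteq> VH \<and> walk_edges P \<subseteq> EH"
    using assms(3) by (auto simp: convex_subgraph_def)
  let ?Q = "\<lambda>n. \<exists>\<P>. partition_on V \<P> \<and> finite \<P> \<and> card \<P> = n \<and> (\<forall>M\<in>\<P>. kdist_mv_set k V E M)"
  have ex: "\<exists>n. ?Q n"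
    using partition_on_singletons[of V] finV singleton_mv[of _ V k E] by blast
  obtain P where P: "partition_on V P" "finite P" "card P = chi_mu k V E" "\<forall>M\<in>P. kdist_mv_set k V E M"
    using LeastI_ex[OF ex] unfolding chi_mu_def by blast
  define P' where "P' = (\<inter>) VH ` P - {{}}"
  have pp: "partition_on VH P'"
    using partition_on_restrict[OF P(1), of VH] sub unfolding P'_def by (simp add: Int_absorb2)
  have fp: "finite P'" using P(2) unfolding P'_def by simp
  have cp: "card P' \<le> card P"
    unfolding P'_def using P(2) by (meson Diff_subset card_mono card_image_le finite_imageI le_trans)
  have mv: "kdist_mv_set k VH EH M'" if M'P: "M' \<in> P'" for M'
  proof -
    obtain M where M: "M \<in> P" "M' = VH \<inter> M" using M'P unfolding P'_def by blast
    have kM: "kdist_mv_set k V E M" using P(4) M(1) by blast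
    show ?thesis unfolding kdist_mv_set_def
    proof (intro conjI ballI)
      show "M' \<subseteq> VH" using M by blast
    next
      fix u v assume uv: "u \<in> M'" "v \<in> M'"
      have uvM: "u \<in> M" "v \<in> M" and uvH: "u \<in> VH" "v \<in> VH" using uv M(2) by auto
      obtain Q where Q: "geodesic V E u v Q" "walk_len Q \<le> k" "internal Q \<inter> M = {}"
        using kM uvM unfolding kdist_mv_set_def by blast
      have QH: "set Q \<subseteq> VH \<and> walk_edges Q \<subseteq> EH" using conv[OF uvH Q(1)] .
      have wG: "walk V E u v Q" using Q(1) unfolding geodesic_def by simp
      have w: "walk VH EH u v Q" using walk_sub[OF wG] QH by simp
      have "geodesic VH EH u v Q"
        unfolding geodesic_def
      proof (intro conjI allI impI)
        show "walk VH EH u v Q" by (rule w)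
      next
        fix ys assume "walk VH EH u v ys"
        then have "walk V E u v ys" by (rule walk_mono[OF _ sub])
        then show "walk_len Q \<le> walk_len ys" using Q(1) unfolding geodesic_def by simp
      qed
      moreover have "internal Q \<inter> M' = {}" using Q(3) M(2) by auto
      ultimately show "\<exists>P. geodesic VH EH u v P \<and> walk_len P \<le> k \<and> internal P \<inter> M' = {}"
        using Q(2) by blast
    qed
  qed
  have "chi_mu k VH EH \<le> card P'"
    unfolding chi_mu_def by (rule Least_le) (use pp fp mv in blast)
  then show ?thesis using cp P(3) by simp
qed

end
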